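(* Assume (C1) and (C2), fix $t>0$ and $i\in\{1,\dots,n\}$, and let $s\in[0,t)$. Let $\mathbb{H}^i(s,x,p)=\sup_{v\in\mathbb{R}^n}\{p\cdot v-\mathbb{L}^i(s,x,v)\}$. Then all $d^i_j(s)>0$ and $$\mathbb{H}^i(s,x,p)=\inf\Big\{\sum_{j=1}^n d^i_j(s)H^j\big(x,q_j/d^i_j(s)\big):\ q_1,\dots,q_n\in\mathbb{R}^n,\ \sum_{j=1}^n q_j=p\Big\},$$ the infimum being attained at a unique $(q_1,\dots,q_n)$; for this minimizer $\mathbb{H}^i_p(s,x,p)=H^j_p(x,q_j/d^i_j(s))$ for every $j$, and $\mathbb{H}^i_x(s,x,p)=\sum_{j=1}^n d^i_j(s)H^j_x(x,q_j/d^i_j(s))$.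
   Context: $L^i$ ($i=1,\dots,n$) are Tonelli Lagrangians on $\mathbb{R}^n\times\mathbb{R}^n$ ($C^2$, strictly convex and uniformly superlinear in $v$), $H^i(x,p)=\sup_{v}\{p\cdot v-L^i(x,v)\}$. $\boldsymbol A=(a^i_j)$ real $n\times n$ with (C1) $a^i_j\le0$ for $i\neq j$ and (C2) $\boldsymbol A$ irreducible. For fixed $t$, $(d^i_j(s))=e^{\boldsymbol A(s-t)}$ and $\mathbb{L}^i(s,x,v)=\sum_{j=1}^n d^i_j(s)L^j(x,v)$. *)

theory Defs
  imports "HOL-Analysis.Analysis"
begin

primrec mat_pow :: "real^'n^'n \<Rightarrow> nat \<Rightarrow> real^'n^'n" where
  "mat_pow M 0 = mat 1"
| "mat_pow M (Suc k) = M ** mat_pow M k"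

definition mat_exp :: "real^'n^'n \<Rightarrow> real^'n^'n" where
  "mat_exp M = (\<Sum>k. (1 / fact k) *\<^sub>R mat_pow M k)"

text \<open>Irreducible matrix: there is no nonempty proper index set I with a_ij = 0
  for all i in I and j not in I (i.e. A is not permutation-similar to a block
  triangular matrix).\<close>

definition irreducible_mat :: "real^'n^'n \<Rightarrow> bool" where
  "irreducible_mat A \<longleftrightarrow>
     \<not> (\<exists>I. I \<noteq> {} \<and> I \<noteq> UNIV \<and> (\<forall>i\<in>I. \<forall>j. j \<notin> I \<longrightarrow> A $ i $ j = 0))"

definition strictly_convex :: "('a::real_vector \<Rightarrow> real) \<Rightarrow> bool" where
  "strictly_convex f \<longleftrightarrow>
     (\<forall>u w \<theta>. u \<noteq> w \<and> 0 < \<theta> \<and> \<theta> < 1 \<longrightarrow>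
        f ((1 - \<theta>) *\<^sub>R u + \<theta> *\<^sub>R w) < (1 - \<theta>) * f u + \<theta> * f w)"

definition C2_fun :: "('a::real_normed_vector \<Rightarrow> real) \<Rightarrow> bool" where
  "C2_fun f \<longleftrightarrow>
     (\<exists>(f' :: 'a \<Rightarrow> ('a \<Rightarrow>\<^sub>L real)) (f'' :: 'a \<Rightarrow> ('a \<Rightarrow>\<^sub>L ('a \<Rightarrow>\<^sub>L real))).
        (\<forall>z. (f has_derivative blinfun_apply (f' z)) (at z)) \<and>
        (\<forall>z. (f' has_derivative blinfun_apply (f'' z)) (at z)) \<and>
        continuous_on UNIV f'')"

definition tonelli :: "(real^'n \<Rightarrow> real^'n \<Rightarrow> real) \<Rightarrow> bool" where
  "tonelli L \<longleftrightarrow>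
     C2_fun (\<lambda>(x, v). L x v) \<and>
     (\<forall>x. strictly_convex (L x)) \<and>
     (\<forall>K. \<exists>C. \<forall>x v. L x v \<ge> K * norm v - C)"

definition hamiltonian :: "(real^'n \<Rightarrow> real^'n \<Rightarrow> real) \<Rightarrow> real^'n \<Rightarrow> real^'n \<Rightarrow> real" where
  "hamiltonian L x p = (SUP v. p \<bullet> v - L x v)"

end

theory Submission
  imports Defs
begin

lemma mat_pow_bound:
  fixes X :: "real^'n::finite^'n"
  shows "\<bar>mat_pow X k $ i $ j\<bar> \<le> (real CARD('n) * (\<Sum>a\<in>UNIV. \<Sum>b\<in>UNIV. \<bar>X$a$b\<bar>))^k"
proof (induction k arbitrary: i j)
  case 0 then show ?case by (simp add: mat_def)
next
  case (Suc k)
  let ?m = "\<Sum>a\<in>UNIV. \<Sum>b\<in>UNIV. \<bar>X$a$b\<bar>"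
  have e: "\<And>a b. \<bar>X$a$b\<bar> \<le> ?m"
  proof -
    fix a b
    have "\<bar>X$a$b\<bar> \<le> (\<Sum>b\<in>UNIV. \<bar>X$a$b\<bar>)" by (rule member_le_sum) auto
    also have "\<dots> \<le> ?m" by (rule member_le_sum[where f="\<lambda>a. \<Sum>b\<in>UNIV. \<bar>X$a$b\<bar>"]) (auto intro: sum_nonneg)
    finally show "\<bar>X$a$b\<bar> \<le> ?m" .
  qed
  have "\<bar>mat_pow X (Suc k) $ i $ j\<bar> = \<bar>\<Sum>l\<in>UNIV. X$i$l * mat_pow X k $ l $ j\<bar>"
    by (simp add: matrix_matrix_mult_def)
  also have "\<dots> \<le> (\<Sum>l\<in>UNIV. \<bar>X$i$l\<bar> * \<bar>mat_pow X k $ l $ j\<bar>)"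
    by (metis (no_types, lifting) abs_mult sum.cong sum_abs)
  also have "\<dots> \<le> (\<Sum>l\<in>(UNIV::'n set). ?m * (real CARD('n) * ?m)^k)"
    by (rule sum_mono, rule mult_mono) (use e Suc in \<open>auto intro: sum_nonneg\<close>)
  also have "\<dots> = (real CARD('n) * ?m)^Suc k" by simp
  finally show ?case .
qed

lemma entry_summable:
  fixes X :: "real^'n::finite^'n"
  shows "summable (\<lambda>k. norm ((1 / fact k) * mat_pow X k $ i $ j))"
proof -
  let ?b = "real CARD('n) * (\<Sum>a\<in>UNIV. \<Sum>b\<in>UNIV. \<bar>X$a$b\<bar>)"
  show ?thesis
  proof (rule summable_comparison_test[OF _ summable_exp[of ?b]])
    show "\<exists>N. \<forall>n\<ge>N. norm (norm (1 / fact n * mat_pow X n $ i $ j)) \<le> inverse (fact n) * ?b ^ n"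
      using mat_pow_bound[of X] by (auto simp: abs_mult divide_inverse intro!: mult_left_mono)
  qed
qed

lemma mat_exp_entry:
  fixes X :: "real^'n::finite^'n"
  shows "mat_exp X $ i $ j = (\<Sum>k. (1 / fact k) * mat_pow X k $ i $ j)"
proof -
  define S where "S = (\<chi> i j. \<Sum>k. (1 / fact k) * mat_pow X k $ i $ j)"
  have "(\<lambda>k. (1 / fact k) *\<^sub>R mat_pow X k) sums S"
    unfolding sums_def
  proof (intro vec_tendstoI)
    fix a b
    have "(\<lambda>k. (1 / fact k) * mat_pow X k $ a $ b) sums (S $ a $ b)"
      unfolding S_def using summable_norm_cancel[OF entry_summable[of X a b]]
      by (simp add: summable_sums)
    then show "((\<lambda>x. (\<Sum>k<x. (1 / fact k) *\<^sub>R mat_pow X k) $ a $ b) \<longlongrightarrow> S $ a $ b) sequentially"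
      by (simp add: sums_def sum_component)
  qed
  then have "mat_exp X = S" unfolding mat_exp_def by (rule sums_unique[symmetric])
  then show ?thesis unfolding S_def by simp
qed



lemma binom_step:
  fixes p :: "nat \<Rightarrow> real" and a :: real
  shows "(\<Sum>m\<le>k. real (k choose m) * a^(k-m) * p (Suc m)) + a * (\<Sum>m\<le>k. real (k choose m) * a^(k-m) * p m)
       = (\<Sum>m\<le>Suc k. real (Suc k choose m) * a^(Suc k - m) * p m)"
proof -
  have r: "(\<Sum>m\<le>Suc k. real (Suc k choose m) * a^(Suc k - m) * p m)
     = a^Suc k * p 0 + (\<Sum>m\<le>k. real (k choose m) * a^(k-m) * p (Suc m))
        + (\<Sum>m\<le>k. real (k choose Suc m) * a^(k-m) * p (Suc m))"
    by (simp add: sum.atMost_Suc_shift sum.distrib algebra_simps del: sum.atMost_Suc)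
  have l: "a * (\<Sum>m\<le>k. real (k choose m) * a^(k-m) * p m)
       = a^Suc k * p 0 + (\<Sum>m\<le>k. real (k choose Suc m) * a^(k-m) * p (Suc m))"
  proof (cases k)
    case 0 then show ?thesis by simp
  next
    case (Suc k')
    have "a * (\<Sum>m\<le>k. real (k choose m) * a^(k-m) * p m)
        = a * (a^k * p 0 + (\<Sum>m\<le>k'. real (k choose Suc m) * a^(k - Suc m) * p (Suc m)))"
      using Suc by (simp only: sum.atMost_Suc_shift) simp
    also have "\<dots> = a^Suc k * p 0 + (\<Sum>m\<le>k'. real (k choose Suc m) * a^(k-m) * p (Suc m))"
      using Suc by (auto simp: sum_distrib_left algebra_simps Suc_diff_le intro!: sum.cong)
    also have "(\<Sum>m\<le>k'. real (k choose Suc m) * a^(k-m) * p (Suc m)) = (\<Sum>m\<le>k. real (k choose Suc m) * a^(k-m) * p (Suc m))"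
      using Suc by (simp only: sum.atMost_Suc) (simp add: binomial_eq_0)
    finally show ?thesis .
  qed
  show ?thesis using r l by simp
qed

lemma mat_pow_shift:
  fixes X :: "real^'n::finite^'n"
  shows "mat_pow (X + a *\<^sub>R mat 1) k $ i $ j = (\<Sum>m\<le>k. real (k choose m) * a^(k-m) * mat_pow X m $ i $ j)"
proof (induction k arbitrary: i j)
  case 0 then show ?case by simp
next
  case (Suc k)
  have "mat_pow (X + a *\<^sub>R mat 1) (Suc k) $ i $ j
      = (\<Sum>l\<in>UNIV. X $ i $ l * mat_pow (X + a *\<^sub>R mat 1) k $ l $ j) + a * mat_pow (X + a *\<^sub>R mat 1) k $ i $ j"
  proof -
    have "\<And>P::real^'n^'n. (X + a *\<^sub>R mat 1) ** P = X ** P + a *\<^sub>R P"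
    proof -
      fix P :: "real^'n^'n"
      have "(X + a *\<^sub>R mat 1) ** P = X ** P + (a *\<^sub>R mat 1) ** P"
        by (simp add: matrix_matrix_mult_def vec_eq_iff sum.distrib distrib_right)
      also have "(a *\<^sub>R mat 1) ** P = a *\<^sub>R P"
        by (simp add: scalar_matrix_assoc[symmetric])
      finally show "(X + a *\<^sub>R mat 1) ** P = X ** P + a *\<^sub>R P" .
    qed
    then show ?thesis by (simp add: matrix_matrix_mult_def)
  qed
  also have "(\<Sum>l\<in>UNIV. X $ i $ l * mat_pow (X + a *\<^sub>R mat 1) k $ l $ j)
      = (\<Sum>m\<le>k. real (k choose m) * a^(k-m) * mat_pow X (Suc m) $ i $ j)"
    by (simp add: Suc sum_distrib_left matrix_matrix_mult_def sum_distrib_right algebra_simps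
        sum.swap[where A=UNIV])
  finally show ?case using binom_step[of k a "\<lambda>m. mat_pow X m $ i $ j"] Suc by simp
qed



lemma mat_exp_shift:
  fixes X :: "real^'n::finite^'n"
  shows "mat_exp (X + a *\<^sub>R mat 1) $ i $ j = exp a * mat_exp X $ i $ j"
proof -
  define \<alpha> where "\<alpha> m = (1 / fact m) * mat_pow X m $ i $ j" for m
  define \<beta> where "\<beta> l = a^l / fact l" for l
  have sa: "summable (\<lambda>k. norm (\<alpha> k))" unfolding \<alpha>_def by (rule entry_summable)
  have sb: "summable (\<lambda>k. norm (\<beta> k))"
    unfolding \<beta>_def using summable_exp[of "\<bar>a\<bar>"]
    by (simp add: abs_mult power_abs divide_inverse mult.commute)
  have eb: "exp a = (\<Sum>l. \<beta> l)" unfolding \<beta>_def exp_def by (simp add: divide_inverse mult.commute)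
  have trm: "(1 / fact k) * (\<Sum>m\<le>k. real (k choose m) * a^(k-m) * mat_pow X m $ i $ j)
        = (\<Sum>m\<le>k. \<alpha> m * \<beta> (k - m))" for k
    unfolding \<alpha>_def \<beta>_def sum_distrib_left
    by (rule sum.cong) (auto simp: binomial_fact field_simps)
  have "mat_exp (X + a *\<^sub>R mat 1) $ i $ j = (\<Sum>k. \<Sum>m\<le>k. \<alpha> m * \<beta> (k - m))"
    unfolding mat_exp_entry mat_pow_shift trm ..
  also have "\<dots> = (\<Sum>k. \<alpha> k) * (\<Sum>k. \<beta> k)" using Cauchy_product[OF sa sb] by simp
  also have "\<dots> = exp a * mat_exp X $ i $ j" by (simp add: eb mat_exp_entry \<alpha>_def)
  finally show ?thesis .
qed

lemma mat_pow_nonneg: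
  fixes X :: "real^'n::finite^'n"
  assumes "\<And>a b. X $ a $ b \<ge> 0"
  shows "mat_pow X k $ i $ j \<ge> 0"
  using assms by (induction k arbitrary: i j) (auto simp: mat_def matrix_matrix_mult_def intro!: sum_nonneg)

lemma mat_pow_reach:
  fixes X :: "real^'n::finite^'n"
  assumes nn: "\<And>a b. X $ a $ b \<ge> 0"
    and irr: "\<And>I. I \<noteq> {} \<Longrightarrow> I \<noteq> UNIV \<Longrightarrow> \<exists>a\<in>I. \<exists>b. b \<notin> I \<and> X $ a $ b > 0"
  shows "\<exists>k. mat_pow X k $ i $ j > 0"
proof (rule ccontr)
  assume nk: "\<not> ?thesis"
  define S where "S = {l. \<exists>k. mat_pow X k $ l $ j > 0}"
  have jS: "j \<in> S" unfolding S_def by (auto intro!: exI[of _ 0] simp: mat_def)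
  have iS: "i \<notin> S" using nk unfolding S_def by auto
  obtain a b where a: "a \<notin> S" and b: "b \<in> S" and ab: "X $ a $ b > 0"
    using irr[of "- S"] jS iS by auto
  from b obtain k where k: "mat_pow X k $ b $ j > 0" unfolding S_def by auto
  have "mat_pow X (Suc k) $ a $ j = (\<Sum>l\<in>UNIV. X $ a $ l * mat_pow X k $ l $ j)"
    by (simp add: matrix_matrix_mult_def)
  also have "\<dots> \<ge> X $ a $ b * mat_pow X k $ b $ j"
    by (rule member_le_sum) (auto intro!: mult_nonneg_nonneg nn mat_pow_nonneg)
  finally have "mat_pow X (Suc k) $ a $ j > 0" using ab k by (smt (verit) mult_pos_pos)
  then have "a \<in> S" unfolding S_def by blast
  with a show False by simp
qed

lemma mat_exp_pos:
  fixes X :: "real^'n::finite^'n"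
  assumes nn: "\<And>a b. X $ a $ b \<ge> 0"
    and irr: "\<And>I. I \<noteq> {} \<Longrightarrow> I \<noteq> UNIV \<Longrightarrow> \<exists>a\<in>I. \<exists>b. b \<notin> I \<and> X $ a $ b > 0"
  shows "mat_exp X $ i $ j > 0"
proof -
  obtain k where k: "mat_pow X k $ i $ j > 0" using mat_pow_reach[OF nn irr] by blast
  show ?thesis unfolding mat_exp_entry
    by (rule suminf_pos2[of _ k]) (use k summable_norm_cancel[OF entry_summable] mat_pow_nonneg[OF nn] in auto)
qed

lemma d_pos:
  fixes A :: "real^'n::finite^'n"
  assumes C1: "\<And>k j. k \<noteq> j \<Longrightarrow> A $ k $ j \<le> 0"
    and C2: "irreducible_mat A"
    and tau: "\<tau> > 0"
  shows "mat_exp ((- \<tau>) *\<^sub>R A) $ i $ j > 0"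
proof -
  define c where "c = (\<Sum>a\<in>UNIV. \<bar>A $ a $ a\<bar>)"
  define X where "X = \<tau> *\<^sub>R (c *\<^sub>R mat 1 - A)"
  have eq: "(- \<tau>) *\<^sub>R A = X + (- \<tau> * c) *\<^sub>R mat 1"
    unfolding X_def by (simp add: vec_eq_iff algebra_simps)
  have cge: "\<bar>A $ a $ a\<bar> \<le> c" for a unfolding c_def by (rule member_le_sum) auto
  have nn: "X $ a $ b \<ge> 0" for a b
  proof (cases "a = b")
    case True then show ?thesis using cge[of a] tau by (simp add: X_def mat_def)
  next
    case False then show ?thesis using C1[OF False] tau by (simp add: X_def mat_def mult_nonneg_nonpos)
  qed
  have irr: "\<exists>a\<in>I. \<exists>b. b \<notin> I \<and> X $ a $ b > 0" if "I \<noteq> {}" "I \<noteq> UNIV" for I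
  proof -
    from C2 that obtain a b where ab: "a \<in> I" "b \<notin> I" "A $ a $ b \<noteq> 0"
      unfolding irreducible_mat_def by blast
    then have "a \<noteq> b" by auto
    then have "X $ a $ b = - \<tau> * A $ a $ b" by (simp add: X_def mat_def)
    moreover have "A $ a $ b < 0" using C1[OF \<open>a \<noteq> b\<close>] ab(3) by simp
    ultimately have "X $ a $ b > 0" using tau by (simp add: mult_pos_neg)
    then show ?thesis using ab by blast
  qed
  show ?thesis unfolding eq mat_exp_shift using mat_exp_pos[OF nn irr] by simp
qed



lemma strictly_convex_convex:
  assumes "strictly_convex f"
  shows "convex_on UNIV f"
proof (rule convex_onI[OF _ convex_UNIV])
  fix x y and t :: real assume t: "0 < t" "t < 1"
  show "f ((1 - t) *\<^sub>R x + t *\<^sub>R y) \<le> (1 - t) * f x + t * f y"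
  proof (cases "x = y")
    case True then show ?thesis
      by (simp add: algebra_simps flip: scaleR_add_left)
  next
    case False
    with t assms show ?thesis unfolding strictly_convex_def by (auto intro: less_imp_le)
  qed
qed

locale gl =
  fixes l :: "real^'n::finite \<Rightarrow> real^'n \<Rightarrow> real"
    and l' :: "(real^'n) \<times> (real^'n) \<Rightarrow> ((real^'n) \<times> (real^'n)) \<Rightarrow>\<^sub>L real"
  assumes der: "\<And>z. ((\<lambda>z. l (fst z) (snd z)) has_derivative blinfun_apply (l' z)) (at z)"
    and cont': "continuous_on UNIV l'"
    and sconv: "\<And>y. strictly_convex (l y)"
    and superlin: "\<And>K. \<exists>C. \<forall>y v. l y v \<ge> K * norm v - C"
begin

definition F where "F y u v = u \<bullet> v - l y v"

lemma cont_l: "continuous_on UNIV (\<lambda>z. l (fst z) (snd z))"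
  by (intro continuous_at_imp_continuous_on ballI has_derivative_continuous[OF der])

lemma cont_l2: "continuous_on UNIV (\<lambda>v. l y v)"
proof -
  have "continuous_on UNIV ((\<lambda>z. l (fst z) (snd z)) \<circ> (\<lambda>v. (y, v)))"
    by (rule continuous_on_compose) (auto intro: continuous_intros continuous_on_subset[OF cont_l])
  then show ?thesis by (simp add: o_def)
qed

lemma cont_F: "continuous_on UNIV (\<lambda>z. F (fst (fst z)) (snd (fst z)) (snd z))"
proof -
  have "continuous_on UNIV ((\<lambda>z. l (fst z) (snd z)) \<circ> (\<lambda>z. (fst (fst z), snd z)))"
    by (rule continuous_on_compose) (auto intro!: continuous_intros continuous_on_subset[OF cont_l])
  then show ?thesis unfolding F_def o_def by (auto intro!: continuous_intros)
qed

lemma der_v: "((l y) has_derivative (\<lambda>h. l' (y, v) (0, h))) (at v)"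
proof -
  have "(((\<lambda>z. l (fst z) (snd z)) \<circ> (\<lambda>v. (y, v))) has_derivative (blinfun_apply (l' (y, v)) \<circ> (\<lambda>h. (0, h)))) (at v)"
    by (rule diff_chain_at) (auto intro!: derivative_eq_intros der)
  then show ?thesis by (simp add: o_def)
qed

lemma max_exists: "\<exists>v. \<forall>w. F y u w \<le> F y u v"
proof -
  obtain C where C: "\<And>y v. l y v \<ge> (norm u + 1) * norm v - C" using superlin by blast
  have up: "F y u w \<le> C - norm w" for w
  proof -
    have "u \<bullet> w \<le> norm u * norm w" by (rule norm_cauchy_schwarz)
    moreover have "l y w \<ge> (norm u + 1) * norm w - C" by (rule C)
    ultimately show ?thesis unfolding F_def by (simp add: algebra_simps)
  qed
  define R where "R = C + l y 0"
  have "continuous_on (cball 0 R) (F y u)"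
    unfolding F_def by (auto intro!: continuous_intros continuous_on_subset[OF cont_l2])
  moreover have "cball 0 R \<noteq> {}" using up[of 0] by (simp add: R_def F_def)
  ultimately obtain v where v: "v \<in> cball 0 R" "\<And>w. w \<in> cball 0 R \<Longrightarrow> F y u w \<le> F y u v"
    using continuous_attains_sup[of "cball 0 R" "F y u"] by auto
  have "F y u w \<le> F y u v" for w
  proof (cases "w \<in> cball 0 R")
    case True then show ?thesis using v by auto
  next
    case False
    then have "F y u w < F y u 0" using up[of w] by (simp add: R_def F_def)
    also have "\<dots> \<le> F y u v" using v(2)[of 0] \<open>cball 0 R \<noteq> {}\<close> by auto
    finally show ?thesis by simp
  qed
  then show ?thesis by blast
qed

definition V where "V y u = (SOME v. \<forall>w. F y u w \<le> F y u v)"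

lemma V_max: "F y u w \<le> F y u (V y u)"
  using someI_ex[OF max_exists[of y u]] unfolding V_def by blast

lemma max_unique:
  assumes "\<forall>w. F y u w \<le> F y u v"
  shows "v = V y u"
proof (rule ccontr)
  assume ne: "v \<noteq> V y u"
  let ?m = "(1 - 1/2) *\<^sub>R v + (1/2::real) *\<^sub>R V y u"
  have "l y ?m < (1 - 1/2) * l y v + (1/2) * l y (V y u)"
  proof -
    have sc: "\<And>a b \<theta>. a \<noteq> b \<Longrightarrow> 0 < \<theta> \<Longrightarrow> \<theta> < 1 \<Longrightarrow> l y ((1 - \<theta>) *\<^sub>R a + \<theta> *\<^sub>R b) < (1 - \<theta>) * l y a + \<theta> * l y b"
      using sconv[of y] unfolding strictly_convex_def by blast
    show ?thesis by (rule sc) (use ne in auto)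
  qed
  then have "F y u ?m > (1 - 1/2) * F y u v + (1/2) * F y u (V y u)"
    unfolding F_def by (simp add: inner_add_right algebra_simps)
  moreover have "F y u v = F y u (V y u)" using assms V_max by (meson order_antisym)
  ultimately show False using V_max[of y u ?m] by simp
qed

lemma ham: "hamiltonian l y u = F y u (V y u)"
  unfolding hamiltonian_def
  by (rule cSup_eq_maximum) (auto simp: F_def[symmetric] V_max)

lemma ham_ge: "hamiltonian l y u \<ge> u \<bullet> v - l y v"
  using ham V_max F_def by metis

lemma fermat:
  assumes "\<forall>w. F y u w \<le> F y u v"
  shows "l' (y, v) (0, h) = u \<bullet> h"
proof -
  have d: "(F y u has_derivative (\<lambda>h. u \<bullet> h - l' (y, v) (0, h))) (at v)"
    unfolding F_def by (auto intro!: derivative_eq_intros der_v)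
  have "(\<lambda>h. u \<bullet> h - l' (y, v) (0, h)) = (\<lambda>h. 0)"
    by (rule differential_zero_maxmin[OF _ open_UNIV d]) (use assms in auto)
  then show ?thesis by (metis (no_types) eq_iff_diff_eq_0)
qed

lemma fermat_conv:
  assumes g: "\<And>h. l' (y, v) (0, h) = u \<bullet> h"
  shows "F y u w \<le> F y u v"
proof -
  define g where "g t = l y (v + t *\<^sub>R (w - v))" for t :: real
  have cv: "convex_on UNIV g"
    unfolding g_def
  proof (rule convex_onI[OF _ convex_UNIV])
    fix a b t :: real assume t: "0 < t" "t < 1"
    have e: "v + ((1 - t) *\<^sub>R a + t *\<^sub>R b) *\<^sub>R (w - v) = (1 - t) *\<^sub>R (v + a *\<^sub>R (w - v)) + t *\<^sub>R (v + b *\<^sub>R (w - v))"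
      by (simp add: algebra_simps)
    show "l y (v + ((1 - t) *\<^sub>R a + t *\<^sub>R b) *\<^sub>R (w - v)) \<le> (1 - t) * l y (v + a *\<^sub>R (w - v)) + t * l y (v + b *\<^sub>R (w - v))"
      unfolding e using convex_onD[OF strictly_convex_convex[OF sconv[of y]]] t by simp
  qed
  have "((l y \<circ> (\<lambda>t. v + t *\<^sub>R (w - v))) has_derivative ((\<lambda>h. l' (y, v) (0, h)) \<circ> (\<lambda>t. t *\<^sub>R (w - v)))) (at 0)"
    by (rule diff_chain_at) (auto intro!: derivative_eq_intros der_v[of y, of v, simplified])
  then have "(g has_derivative (\<lambda>t. t * (u \<bullet> (w - v)))) (at 0)"
    by (simp add: o_def g_def[abs_def] g blinfun.scaleR_right inner_scaleR_right)
  then have "(g has_field_derivative (u \<bullet> (w - v))) (at 0 within UNIV)"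
    by (auto intro!: has_derivative_imp_has_field_derivative)
  from convex_on_imp_above_tangent[OF cv connected_UNIV _ _ this]
  have "g 1 - g 0 \<ge> u \<bullet> (w - v) * (1 - 0)" by (metis UNIV_I interior_UNIV)
  then show ?thesis unfolding g_def F_def by (simp add: inner_diff_right)
qed

end


context gl begin

lemma V_bound: "\<exists>R. \<forall>y u. dist y x0 \<le> 1 \<longrightarrow> dist u u0 \<le> 1 \<longrightarrow> norm (V y u) \<le> R"
proof -
  obtain C where C: "\<And>y v. l y v \<ge> (norm u0 + 2) * norm v - C" using superlin by blast
  have cy: "continuous_on UNIV (\<lambda>y. l y 0)"
  proof -
    have "continuous_on UNIV ((\<lambda>z. l (fst z) (snd z)) \<circ> (\<lambda>y. (y, 0)))"
      by (rule continuous_on_compose) (auto intro!: continuous_intros continuous_on_subset[OF cont_l])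
    then show ?thesis by (simp add: o_def)
  qed
  have "compact ((\<lambda>y. l y 0) ` cball x0 1)"
    by (rule compact_continuous_image) (auto intro: continuous_on_subset[OF cy])
  then obtain B where B: "\<And>y. y \<in> cball x0 1 \<Longrightarrow> norm (l y 0) \<le> B"
    using compact_imp_bounded bounded_iff by (metis image_eqI)
  have "norm (V y u) \<le> C + B" if "dist y x0 \<le> 1" "dist u u0 \<le> 1" for y u
  proof -
    have nu: "norm u \<le> norm u0 + 1"
      using that(2) norm_triangle_ineq2[of u u0] by (simp add: dist_norm)
    have "F y u 0 \<le> F y u (V y u)" by (rule V_max)
    then have "- l y 0 \<le> u \<bullet> V y u - l y (V y u)" by (simp add: F_def)
    moreover have "u \<bullet> V y u \<le> norm u * norm (V y u)" by (rule norm_cauchy_schwarz)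
    moreover have "norm u * norm (V y u) \<le> (norm u0 + 1) * norm (V y u)"
      using nu by (simp add: mult_right_mono)
    moreover have "l y (V y u) \<ge> (norm u0 + 2) * norm (V y u) - C" by (rule C)
    moreover have "norm (l y 0) \<le> B" using B[of y] that(1) by (simp add: dist_commute)
    ultimately show ?thesis by (simp add: algebra_simps)
  qed
  then show ?thesis by blast
qed

lemma V_cont:
  assumes e: "e > 0"
  shows "\<exists>\<delta>>0. \<forall>y u. dist (y, u) (x0, u0) < \<delta> \<longrightarrow> dist (V y u) (V x0 u0) < e"
proof -
  define V0 where "V0 = V x0 u0"
  obtain R where R: "\<And>y u. dist y x0 \<le> 1 \<Longrightarrow> dist u u0 \<le> 1 \<Longrightarrow> norm (V y u) \<le> R"
    using V_bound[of x0 u0] by blast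
  have near: "dist y x0 \<le> 1 \<and> dist u u0 \<le> 1" if "dist (y, u) (x0, u0) < 1" for y u
    using that dist_fst_le[of "(y,u)" "(x0,u0)"] dist_snd_le[of "(y,u)" "(x0,u0)"] by auto
  define K where "K = cball 0 R - ball V0 e"
  show ?thesis
  proof (cases "K = {}")
    case True
    show ?thesis
    proof (intro exI[of _ 1] conjI allI impI)
      fix y u assume "dist (y, u) (x0, u0) < 1"
      then have "V y u \<in> cball 0 R" using R near by auto
      then show "dist (V y u) (V x0 u0) < e" using True unfolding K_def V0_def by (auto simp: dist_commute)
    qed simp
  next
    case False
    have cK: "compact K" unfolding K_def by (intro compact_diff) auto
    have cF0: "continuous_on K (F x0 u0)"
      unfolding F_def by (auto intro!: continuous_intros continuous_on_subset[OF cont_l2])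
    obtain k where k: "k \<in> K" "\<And>w. w \<in> K \<Longrightarrow> F x0 u0 w \<le> F x0 u0 k"
      using continuous_attains_sup[OF cK False cF0] by blast
    have lt: "F x0 u0 k < F x0 u0 V0"
    proof -
      have "F x0 u0 k \<le> F x0 u0 V0" unfolding V0_def by (rule V_max)
      moreover have "F x0 u0 k \<noteq> F x0 u0 V0"
      proof
        assume eq: "F x0 u0 k = F x0 u0 V0"
        have "k = V0" unfolding V0_def by (rule max_unique) (use V_max eq V0_def in metis)
        then show False using k(1) e unfolding K_def by auto
      qed
      ultimately show ?thesis by simp
    qed
    define \<eta> where "\<eta> = F x0 u0 V0 - F x0 u0 k"
    have \<eta>: "\<eta> > 0" using lt \<eta>_def by simp
    define S where "S = cball (x0, u0) 1 \<times> cball (0::real^'n) R"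
    have "uniformly_continuous_on S (\<lambda>z. F (fst (fst z)) (snd (fst z)) (snd z))"
      by (rule compact_uniformly_continuous) (auto simp: S_def intro: continuous_on_subset[OF cont_F] compact_Times)
    then obtain d where d: "d > 0" and
      dd: "\<And>p p'. p \<in> S \<Longrightarrow> p' \<in> S \<Longrightarrow> dist p' p < d \<Longrightarrow>
            dist (F (fst (fst p')) (snd (fst p')) (snd p')) (F (fst (fst p)) (snd (fst p)) (snd p)) < \<eta>/2"
      unfolding uniformly_continuous_on_def using \<eta> by (metis half_gt_zero)
    show ?thesis
    proof (intro exI[of _ "min d 1"] conjI allI impI)
      fix y u assume yu: "dist (y, u) (x0, u0) < min d 1"
      have close: "\<bar>F y u v - F x0 u0 v\<bar> < \<eta>/2" if "norm v \<le> R" for v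
        using dd[of "((x0,u0),v)" "((y,u),v)"] yu that
        by (auto simp: S_def dist_Pair_Pair dist_commute dist_real_def abs_minus_commute)
      have V0R: "norm V0 \<le> R" unfolding V0_def by (rule R) auto
      have VR: "norm (V y u) \<le> R" using R near yu by auto
      have "V y u \<notin> K"
      proof
        assume inK: "V y u \<in> K"
        have "F y u (V y u) < F x0 u0 (V y u) + \<eta>/2" using close[OF VR] by linarith
        also have "\<dots> \<le> F x0 u0 k + \<eta>/2" using k(2)[OF inK] by simp
        finally have a: "F y u (V y u) < F x0 u0 k + \<eta>/2" .
        have "F x0 u0 V0 - \<eta>/2 < F y u V0" using close[OF V0R] by linarith
        also have "\<dots> \<le> F y u (V y u)" by (rule V_max)
        finally show False using a \<eta>_def by linarith
      qed
      then show "dist (V y u) (V x0 u0) < e" using VR unfolding K_def V0_def by (auto simp: dist_commute)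
    qed (use d in simp)
  qed
qed

end


context gl begin

lemma der_z: "((\<lambda>z. F (fst z) (snd z) v) has_derivative (\<lambda>w. snd w \<bullet> v - l' (fst z, v) (fst w, 0))) (at z)"
proof -
  have "(((\<lambda>z. l (fst z) (snd z)) \<circ> (\<lambda>z. (fst z, v))) has_derivative (blinfun_apply (l' (fst z, v)) \<circ> (\<lambda>w. (fst w, 0)))) (at z)"
    by (rule diff_chain_at) (auto intro!: derivative_eq_intros der)
  then have "((\<lambda>z. l (fst z) v) has_derivative (\<lambda>w. l' (fst z, v) (fst w, 0))) (at z)"
    by (simp add: o_def)
  then show ?thesis unfolding F_def by (auto intro!: derivative_eq_intros)
qed

lemma seg_mvt:
  "\<exists>t. 0 < t \<and> t < 1 \<and> F (fst z) (snd z) v - F (fst z0) (snd z0) v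
       = snd (z - z0) \<bullet> v - l' (fst (z0 + t *\<^sub>R (z - z0)), v) (fst (z - z0), 0)"
proof -
  define g where "g t = F (fst (z0 + t *\<^sub>R (z - z0))) (snd (z0 + t *\<^sub>R (z - z0))) v" for t :: real
  define g' where "g' t = (\<lambda>s. snd (s *\<^sub>R (z - z0)) \<bullet> v - l' (fst (z0 + t *\<^sub>R (z - z0)), v) (fst (s *\<^sub>R (z - z0)), 0))" for t :: real
  have gd: "(g has_derivative g' t) (at t within {0..1})" for t
  proof -
    have "(((\<lambda>z. F (fst z) (snd z) v) \<circ> (\<lambda>t. z0 + t *\<^sub>R (z - z0))) has_derivative
       ((\<lambda>w. snd w \<bullet> v - l' (fst (z0 + t *\<^sub>R (z - z0)), v) (fst w, 0)) \<circ> (\<lambda>s. s *\<^sub>R (z - z0)))) (at t)"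
    proof (rule diff_chain_at)
      show "((\<lambda>t. z0 + t *\<^sub>R (z - z0)) has_derivative (\<lambda>s. s *\<^sub>R (z - z0))) (at t)"
        by (auto intro!: derivative_eq_intros)
      show "((\<lambda>z. F (fst z) (snd z) v) has_derivative (\<lambda>w. snd w \<bullet> v - l' (fst (z0 + t *\<^sub>R (z - z0)), v) (fst w, 0))) (at (z0 + t *\<^sub>R (z - z0)))"
        by (rule der_z)
    qed
    then show ?thesis unfolding g_def[abs_def] g'_def o_def by (rule has_derivative_at_withinI)
  qed
  obtain t where t: "t \<in> {0<..<1}" "g 1 - g 0 = g' t (1 - 0)"
    using mvt_simple[of 0 1 g g'] gd by auto
  then show ?thesis unfolding g_def g'_def by auto
qed

lemma est:
  assumes lc: "\<And>p. dist p (x0, V x0 u0) < d1 \<Longrightarrow> norm (l' p - l' (x0, V x0 u0)) \<le> e"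
    and vv: "dist v (V x0 u0) < d1/2" "norm (v - V x0 u0) \<le> e"
    and zz: "norm (z - (x0, u0)) < d1/2"
  shows "\<bar>F (fst z) (snd z) v - F x0 u0 v - (snd (z - (x0,u0)) \<bullet> V x0 u0 - l' (x0, V x0 u0) (fst (z - (x0,u0)), 0))\<bar>
     \<le> 2 * e * norm (z - (x0, u0))"
proof -
  define V0 where "V0 = V x0 u0"
  define h where "h = z - (x0, u0)"
  obtain t where t: "0 < t" "t < 1" and eq: "F (fst z) (snd z) v - F (fst (x0,u0)) (snd (x0,u0)) v
       = snd h \<bullet> v - l' (fst ((x0,u0) + t *\<^sub>R h), v) (fst h, 0)"
    using seg_mvt[where z=z and z0="(x0,u0)" and v=v] unfolding h_def by blast
  define p where "p = (fst ((x0,u0) + t *\<^sub>R h), v)"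
  have "dist (fst ((x0,u0) + t *\<^sub>R h)) x0 \<le> norm h"
  proof -
    have "dist (fst ((x0,u0) + t *\<^sub>R h)) x0 = norm (fst (t *\<^sub>R h))" by (simp add: dist_norm)
    also have "\<dots> \<le> norm (t *\<^sub>R h)" by (metis norm_fst_le prod.collapse)
    also have "\<dots> \<le> norm h" using t by (simp add: mult_left_le_one_le)
    finally show ?thesis .
  qed
  then have "dist p (x0, V0) < d1"
  proof -
    assume a: "dist (fst ((x0,u0) + t *\<^sub>R h)) x0 \<le> norm h"
    have "dist p (x0, V0) \<le> dist (fst ((x0,u0) + t *\<^sub>R h)) x0 + dist v V0"
      unfolding p_def dist_Pair_Pair using sqrt_sum_squares_le_sum_abs[of "dist (x0 + t *\<^sub>R fst h) x0" "dist v V0"] by simp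
    then show ?thesis using a vv(1) zz unfolding h_def V0_def by linarith
  qed
  then have lp: "norm (l' p - l' (x0, V0)) \<le> e" using lc unfolding V0_def by blast
  have "\<bar>l' p (fst h, 0) - l' (x0, V0) (fst h, 0)\<bar> = norm ((l' p - l' (x0, V0)) (fst h, 0))"
    by (simp add: blinfun.diff_left)
  also have "\<dots> \<le> norm (l' p - l' (x0, V0)) * norm (fst h, 0::real^'n)" by (rule norm_blinfun)
  also have "\<dots> \<le> e * norm h"
  proof -
    have "norm (fst h) \<le> norm h" using norm_fst_le[of "fst h" "snd h"] by simp
    moreover have "0 \<le> e" using lp by (meson norm_ge_zero order_trans)
    ultimately show ?thesis using lp by (intro mult_mono) (auto simp: norm_Pair)
  qed
  finally have a: "\<bar>l' p (fst h, 0) - l' (x0, V0) (fst h, 0)\<bar> \<le> e * norm h" .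
  have "\<bar>snd h \<bullet> (v - V0)\<bar> \<le> norm (snd h) * norm (v - V0)" by (rule Cauchy_Schwarz_ineq2)
  also have "\<dots> \<le> norm h * e"
    using vv(2) norm_snd_le[where x="fst h" and y="snd h"] unfolding V0_def by (intro mult_mono) auto
  finally have b: "\<bar>snd h \<bullet> (v - V0)\<bar> \<le> norm h * e" .
  have "F (fst z) (snd z) v - F x0 u0 v - (snd h \<bullet> V0 - l' (x0, V0) (fst h, 0))
      = snd h \<bullet> (v - V0) - (l' p (fst h, 0) - l' (x0, V0) (fst h, 0))"
    using eq unfolding p_def by (simp add: inner_diff_right)
  then have "\<bar>F (fst z) (snd z) v - F x0 u0 v - (snd h \<bullet> V0 - l' (x0, V0) (fst h, 0))\<bar>
      \<le> \<bar>snd h \<bullet> (v - V0)\<bar> + \<bar>l' p (fst h, 0) - l' (x0, V0) (fst h, 0)\<bar>"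
    by (simp only: abs_triangle_ineq4)
  moreover have "norm h * e = e * norm h" by simp
  ultimately show ?thesis using a b unfolding h_def[symmetric] V0_def[symmetric] by linarith
qed

end


lemma blinfun_zero_pair[simp]: "blinfun_apply b (0, 0) = 0"
  by (metis blinfun.zero_right zero_prod_def)

context gl begin

lemma envelope:
  "((\<lambda>z. F (fst z) (snd z) (V (fst z) (snd z))) has_derivative
     (\<lambda>w. snd w \<bullet> V x0 u0 - l' (x0, V x0 u0) (fst w, 0))) (at (x0, u0))"
  unfolding has_derivative_at_alt
proof (intro conjI allI impI)
  show "bounded_linear (\<lambda>w. snd w \<bullet> V x0 u0 - l' (x0, V x0 u0) (fst w, 0))"
    using has_derivative_bounded_linear[OF der_z[where z="(x0,u0)" and v="V x0 u0"]] by simp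
  fix e :: real assume e: "e > 0"
  define V0 where "V0 = V x0 u0"
  have "isCont l' (x0, V0)" using cont' continuous_on_eq_continuous_at[OF open_UNIV] by blast
  then obtain d1 where d1: "d1 > 0" and lc0: "\<And>p. dist p (x0, V0) < d1 \<Longrightarrow> dist (l' p) (l' (x0, V0)) < e/2"
    unfolding continuous_at_eps_delta using e by (meson half_gt_zero)
  have lc: "\<And>p. dist p (x0, V x0 u0) < d1 \<Longrightarrow> norm (l' p - l' (x0, V x0 u0)) \<le> e/2"
    using lc0 unfolding V0_def dist_norm by (meson less_imp_le)
  obtain d2 where d2: "d2 > 0" and vc: "\<And>y u. dist (y, u) (x0, u0) < d2 \<Longrightarrow> dist (V y u) V0 < min (d1/2) (e/2)"
    using V_cont[of "min (d1/2) (e/2)" x0 u0] d1 e unfolding V0_def by auto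
  show "\<exists>d>0. \<forall>z. norm (z - (x0, u0)) < d \<longrightarrow>
      norm (F (fst z) (snd z) (V (fst z) (snd z)) - F (fst (x0, u0)) (snd (x0, u0)) (V (fst (x0, u0)) (snd (x0, u0)))
        - (snd (z - (x0, u0)) \<bullet> V x0 u0 - l' (x0, V x0 u0) (fst (z - (x0, u0)), 0))) \<le> e * norm (z - (x0, u0))"
  proof (intro exI[of _ "min (d1/2) d2"] conjI allI impI)
    show "min (d1/2) d2 > 0" using d1 d2 by simp
    fix z :: "(real^'n) \<times> (real^'n)"
    assume zn: "norm (z - (x0, u0)) < min (d1/2) d2"
    define Vz where "Vz = V (fst z) (snd z)"
    define D where "D = snd (z - (x0, u0)) \<bullet> V0 - l' (x0, V0) (fst (z - (x0, u0)), 0)"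
    have "dist (Vz) V0 < min (d1/2) (e/2)"
      unfolding Vz_def by (rule vc) (use zn in \<open>simp add: dist_norm\<close>)
    then have vz1: "dist Vz (V x0 u0) < d1/2" and vz2: "norm (Vz - V x0 u0) \<le> e/2"
      unfolding V0_def dist_norm by auto
    have zz: "norm (z - (x0, u0)) < d1/2" using zn by simp
    have E1: "\<bar>F (fst z) (snd z) V0 - F x0 u0 V0 - D\<bar> \<le> 2 * (e/2) * norm (z - (x0, u0))"
      using est[OF lc _ _ zz, of V0] d1 e unfolding D_def V0_def by simp
    have E2: "\<bar>F (fst z) (snd z) Vz - F x0 u0 Vz - D\<bar> \<le> 2 * (e/2) * norm (z - (x0, u0))"
      using est[OF lc vz1 vz2 zz] unfolding D_def V0_def by simp
    have lo: "F (fst z) (snd z) V0 \<le> F (fst z) (snd z) Vz" unfolding Vz_def by (rule V_max)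
    have hi: "F x0 u0 Vz \<le> F x0 u0 V0" unfolding V0_def by (rule V_max)
    have "\<bar>F (fst z) (snd z) Vz - F x0 u0 V0 - D\<bar> \<le> e * norm (z - (x0, u0))"
      using E1 E2 lo hi by (simp add: abs_le_iff)
    then show "norm (F (fst z) (snd z) (V (fst z) (snd z)) - F (fst (x0, u0)) (snd (x0, u0)) (V (fst (x0, u0)) (snd (x0, u0)))
        - (snd (z - (x0, u0)) \<bullet> V x0 u0 - l' (x0, V x0 u0) (fst (z - (x0, u0)), 0))) \<le> e * norm (z - (x0, u0))"
      unfolding Vz_def D_def V0_def by simp
  qed
qed

lemma ham_eq: "hamiltonian l y u = F y u (V y u)" by (rule ham)

lemma der_p: "((\<lambda>u. hamiltonian l x0 u) has_derivative (\<lambda>k. V x0 u0 \<bullet> k)) (at u0)"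
proof -
  have "(((\<lambda>z. F (fst z) (snd z) (V (fst z) (snd z))) \<circ> (\<lambda>u. (x0, u))) has_derivative
     ((\<lambda>w. snd w \<bullet> V x0 u0 - l' (x0, V x0 u0) (fst w, 0)) \<circ> (\<lambda>k. (0, k)))) (at u0)"
  proof (rule diff_chain_at)
    show "((\<lambda>u. (x0, u)) has_derivative (\<lambda>k. (0, k))) (at u0)" by (auto intro!: derivative_eq_intros)
    show "((\<lambda>z. F (fst z) (snd z) (V (fst z) (snd z))) has_derivative
     (\<lambda>w. snd w \<bullet> V x0 u0 - l' (x0, V x0 u0) (fst w, 0))) (at (x0, u0))" by (rule envelope)
  qed
  then show ?thesis by (simp add: o_def ham inner_commute)
qed

lemma der_x: "((\<lambda>y. hamiltonian l y u0) has_derivative (\<lambda>h. - l' (x0, V x0 u0) (h, 0))) (at x0)"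
proof -
  have "(((\<lambda>z. F (fst z) (snd z) (V (fst z) (snd z))) \<circ> (\<lambda>y. (y, u0))) has_derivative
     ((\<lambda>w. snd w \<bullet> V x0 u0 - l' (x0, V x0 u0) (fst w, 0)) \<circ> (\<lambda>h. (h, 0)))) (at x0)"
  proof (rule diff_chain_at)
    show "((\<lambda>y. (y, u0)) has_derivative (\<lambda>h. (h, 0))) (at x0)" by (auto intro!: derivative_eq_intros)
    show "((\<lambda>z. F (fst z) (snd z) (V (fst z) (snd z))) has_derivative
     (\<lambda>w. snd w \<bullet> V x0 u0 - l' (x0, V x0 u0) (fst w, 0))) (at (x0, u0))" by (rule envelope)
  qed
  then show ?thesis by (simp add: o_def ham)
qed

end


lemma tonelli_gl:
  fixes L :: "real^'n::finite \<Rightarrow> real^'n \<Rightarrow> real"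
  assumes "tonelli L"
  shows "\<exists>l'. gl L l'"
proof -
  from assms obtain f' :: "(real^'n) \<times> (real^'n) \<Rightarrow> ((real^'n) \<times> (real^'n)) \<Rightarrow>\<^sub>L real" and f''
    where d: "\<And>z. ((\<lambda>(x, v). L x v) has_derivative blinfun_apply (f' z)) (at z)"
      and d2: "\<And>z. (f' has_derivative blinfun_apply (f'' z)) (at z)"
    unfolding tonelli_def C2_fun_def by blast
  have "(\<lambda>(x, v). L x v) = (\<lambda>z. L (fst z) (snd z))" by (auto simp: fun_eq_iff split_beta)
  with d have d': "\<And>z. ((\<lambda>z. L (fst z) (snd z)) has_derivative blinfun_apply (f' z)) (at z)" by simp
  have "continuous_on UNIV f'"
    by (intro continuous_at_imp_continuous_on ballI has_derivative_continuous[OF d2])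
  then have "gl L f'" using d' assms unfolding gl_def tonelli_def by blast
  then show ?thesis by blast
qed

lemma sum_gl:
  fixes L :: "'j::finite \<Rightarrow> real^'n::finite \<Rightarrow> real^'n \<Rightarrow> real"
  assumes g: "\<And>j. gl (L j) (l' j)" and w: "\<And>j. w j > 0"
  shows "gl (\<lambda>y v. \<Sum>j\<in>UNIV. w j * L j y v) (\<lambda>z. \<Sum>j\<in>UNIV. w j *\<^sub>R l' j z)"
proof
  fix z
  show "((\<lambda>z. \<Sum>j\<in>UNIV. w j * L j (fst z) (snd z)) has_derivative blinfun_apply (\<Sum>j\<in>UNIV. w j *\<^sub>R l' j z)) (at z)"
  proof -
    have dj: "\<And>j. ((\<lambda>z. L j (fst z) (snd z)) has_derivative blinfun_apply (l' j z)) (at z)"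
      using gl.der[OF g] by blast
    show ?thesis
      by (auto intro!: derivative_eq_intros dj simp: blinfun.sum_left blinfun.scaleR_left)
  qed
next
  show "continuous_on UNIV (\<lambda>z. \<Sum>j\<in>UNIV. w j *\<^sub>R l' j z)"
    using gl.cont'[OF g] by (auto intro!: continuous_intros)
next
  fix y
  show "strictly_convex (\<lambda>v. \<Sum>j\<in>UNIV. w j * L j y v)"
    unfolding strictly_convex_def
  proof (intro allI impI)
    fix u v :: "real^'n" and \<theta> :: real assume a: "u \<noteq> v \<and> 0 < \<theta> \<and> \<theta> < 1"
    have "(\<Sum>j\<in>UNIV. w j * L j y ((1 - \<theta>) *\<^sub>R u + \<theta> *\<^sub>R v))
        < (\<Sum>j\<in>UNIV. w j * ((1 - \<theta>) * L j y u + \<theta> * L j y v))"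
    proof (rule sum_strict_mono)
      fix j
      have "L j y ((1 - \<theta>) *\<^sub>R u + \<theta> *\<^sub>R v) < (1 - \<theta>) * L j y u + \<theta> * L j y v"
        using gl.sconv[OF g, of j y] a unfolding strictly_convex_def by blast
      then show "w j * L j y ((1 - \<theta>) *\<^sub>R u + \<theta> *\<^sub>R v) < w j * ((1 - \<theta>) * L j y u + \<theta> * L j y v)"
        using w[of j] by simp
    qed auto
    show "(\<Sum>j\<in>UNIV. w j * L j y ((1 - \<theta>) *\<^sub>R u + \<theta> *\<^sub>R v))
        < (1 - \<theta>) * (\<Sum>j\<in>UNIV. w j * L j y u) + \<theta> * (\<Sum>j\<in>UNIV. w j * L j y v)"
    proof -
      have "(\<Sum>j\<in>UNIV. w j * ((1 - \<theta>) * L j y u + \<theta> * L j y v))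
          = (1 - \<theta>) * (\<Sum>j\<in>UNIV. w j * L j y u) + \<theta> * (\<Sum>j\<in>UNIV. w j * L j y v)"
        by (simp add: distrib_left sum.distrib sum_distrib_left mult.left_commute)
      then show ?thesis using \<open>(\<Sum>j\<in>UNIV. w j * L j y ((1 - \<theta>) *\<^sub>R u + \<theta> *\<^sub>R v))
        < (\<Sum>j\<in>UNIV. w j * ((1 - \<theta>) * L j y u + \<theta> * L j y v))\<close> by simp
    qed
  qed
next
  fix K
  have "\<forall>j. \<exists>C. \<forall>y v. L j y v \<ge> (K / (w j * real CARD('j))) * norm v - C"
    using gl.superlin[OF g] by blast
  then obtain C where C: "\<And>j y v. L j y v \<ge> (K / (w j * real CARD('j))) * norm v - C j"
    by metis
  show "\<exists>C. \<forall>y v. (\<Sum>j\<in>UNIV. w j * L j y v) \<ge> K * norm v - C"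
  proof (intro exI allI)
    fix y v
    have "(\<Sum>j\<in>UNIV. K / real CARD('j) * norm v - w j * C j) \<le> (\<Sum>j\<in>UNIV. w j * L j y v)"
    proof (rule sum_mono)
      fix j
      have "w j * ((K / (w j * real CARD('j))) * norm v - C j) \<le> w j * L j y v"
        using C[where j=j and y=y and v=v] w[of j] by (intro mult_left_mono) auto
      then show "K / real CARD('j) * norm v - w j * C j \<le> w j * L j y v"
        using w[of j] by (simp add: algebra_simps)
    qed
    moreover have "(\<Sum>j\<in>UNIV. K / real CARD('j) * norm v - w j * C j) = K * norm v - (\<Sum>j\<in>UNIV. w j * C j)"
      by (simp add: sum_subtractf)
    ultimately show "(\<Sum>j\<in>UNIV. w j * L j y v) \<ge> K * norm v - (\<Sum>j\<in>UNIV. w j * C j)" by simp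
  qed
qed

lemma grad_blinfun:
  fixes B :: "((real^'n::finite) \<times> (real^'n)) \<Rightarrow>\<^sub>L real"
  shows "(\<Sum>b\<in>Basis. B (0, b) *\<^sub>R b) \<bullet> h = B (0, h)"
    and "(\<Sum>b\<in>Basis. B (b, 0) *\<^sub>R b) \<bullet> h = B (h, 0)"
proof -
  have hs: "h = (\<Sum>b\<in>Basis. (h \<bullet> b) *\<^sub>R b)" by (simp add: euclidean_representation)
  have p1: "(0::real^'n, h) = (\<Sum>b\<in>Basis. (h \<bullet> b) *\<^sub>R (0, b))"
    by (subst hs) (simp add: prod_eq_iff fst_sum snd_sum)
  have p2: "(h, 0::real^'n) = (\<Sum>b\<in>Basis. (h \<bullet> b) *\<^sub>R (b, 0))"
    by (subst hs) (simp add: prod_eq_iff fst_sum snd_sum)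
  have "B (0,h) = (\<Sum>b\<in>Basis. (h \<bullet> b) * B (0,b))"
    by (subst p1) (simp only: blinfun.sum_right blinfun.scaleR_right real_scaleR_def)
  moreover have "(\<Sum>b\<in>Basis. B (0, b) *\<^sub>R b) \<bullet> h = (\<Sum>b\<in>Basis. B (0,b) * (b \<bullet> h))"
    by (simp add: inner_sum_left)
  ultimately show "(\<Sum>b\<in>Basis. B (0, b) *\<^sub>R b) \<bullet> h = B (0, h)"
    by (simp add: inner_commute mult.commute)
  have "B (h,0) = (\<Sum>b\<in>Basis. (h \<bullet> b) * B (b,0))"
    by (subst p2) (simp only: blinfun.sum_right blinfun.scaleR_right real_scaleR_def)
  moreover have "(\<Sum>b\<in>Basis. B (b, 0) *\<^sub>R b) \<bullet> h = (\<Sum>b\<in>Basis. B (b,0) * (b \<bullet> h))"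
    by (simp add: inner_sum_left)
  ultimately show "(\<Sum>b\<in>Basis. B (b, 0) *\<^sub>R b) \<bullet> h = B (h, 0)"
    by (simp add: inner_commute mult.commute)
qed

lemma inner_ext:
  fixes a b :: "'a::real_inner"
  assumes "\<And>h. a \<bullet> h = b \<bullet> h"
  shows "a = b"
proof -
  have "(a - b) \<bullet> (a - b) = 0" using assms[of "a - b"] by (simp add: inner_diff_left)
  then show ?thesis by simp
qed



theorem mainTheorem2:
  fixes L :: "'n::finite \<Rightarrow> real^'n \<Rightarrow> real^'n \<Rightarrow> real"
    and A :: "real^'n^'n"
    and t s :: real and i :: 'n
  assumes tonelli: "\<And>j. tonelli (L j)"
    and C1: "\<And>k j. k \<noteq> j \<Longrightarrow> A $ k $ j \<le> 0"
    and C2: "irreducible_mat A"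
    and t_pos: "t > 0"
    and s_in: "0 \<le> s" "s < t"
  defines "d \<equiv> (\<lambda>j. mat_exp ((s - t) *\<^sub>R A) $ i $ j)"
    and "H \<equiv> (\<lambda>j. hamiltonian (L j))"
    and "HH \<equiv> hamiltonian (\<lambda>x v. \<Sum>j\<in>UNIV. mat_exp ((s - t) *\<^sub>R A) $ i $ j * L j x v)"
  shows "(\<forall>j. d j > 0) \<and>
    (\<forall>x p.
       HH x p = Inf {(\<Sum>j\<in>UNIV. d j * H j x ((1 / d j) *\<^sub>R q j)) | q. (\<Sum>j\<in>UNIV. q j) = p} \<and>
       (\<exists>q. (\<Sum>j\<in>UNIV. q j) = p \<and>
            (\<Sum>j\<in>UNIV. d j * H j x ((1 / d j) *\<^sub>R q j)) = HH x p \<and>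
            (\<forall>q'. (\<Sum>j\<in>UNIV. q' j) = p \<and>
                  (\<Sum>j\<in>UNIV. d j * H j x ((1 / d j) *\<^sub>R q' j)) = HH x p \<longrightarrow> q' = q) \<and>
            (\<exists>Gp. ((\<lambda>p'. HH x p') has_derivative (\<lambda>h. Gp \<bullet> h)) (at p) \<and>
                  (\<forall>j. ((\<lambda>p'. H j x p') has_derivative (\<lambda>h. Gp \<bullet> h)) (at ((1 / d j) *\<^sub>R q j)))) \<and>
            (\<exists>Gx. (\<forall>j. ((\<lambda>y. H j y ((1 / d j) *\<^sub>R q j)) has_derivative (\<lambda>h. Gx j \<bullet> h)) (at x)) \<and>
                  ((\<lambda>y. HH y p) has_derivative (\<lambda>h. (\<Sum>j\<in>UNIV. d j *\<^sub>R Gx j) \<bullet> h)) (at x))))"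
proof -
  define \<tau> where "\<tau> = t - s"
  have \<tau>: "\<tau> > 0" using s_in by (simp add: \<tau>_def)
  have sA: "(s - t) *\<^sub>R A = (- \<tau>) *\<^sub>R A" by (simp add: \<tau>_def)
  have dpos: "\<And>j. d j > 0" unfolding d_def sA by (rule d_pos[OF C1 C2 \<tau>])
  have "\<forall>j. \<exists>l'. gl (L j) l'" using tonelli_gl[OF tonelli] by blast
  then obtain l' where gj: "\<And>j. gl (L j) (l' j)" by metis
  define LL where "LL = (\<lambda>y v. \<Sum>j\<in>UNIV. d j * L j y v)"
  define LL' where "LL' = (\<lambda>z. \<Sum>j\<in>UNIV. d j *\<^sub>R l' j z)"
  have gM: "gl LL LL'" unfolding LL_def LL'_def by (rule sum_gl[OF gj dpos])
  have HHe: "HH = hamiltonian LL" unfolding HH_def LL_def d_def ..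
  have main: "HH x p = Inf {(\<Sum>j\<in>UNIV. d j * H j x ((1 / d j) *\<^sub>R q j)) | q. (\<Sum>j\<in>UNIV. q j) = p} \<and>
       (\<exists>q. (\<Sum>j\<in>UNIV. q j) = p \<and>
            (\<Sum>j\<in>UNIV. d j * H j x ((1 / d j) *\<^sub>R q j)) = HH x p \<and>
            (\<forall>q'. (\<Sum>j\<in>UNIV. q' j) = p \<and>
                  (\<Sum>j\<in>UNIV. d j * H j x ((1 / d j) *\<^sub>R q' j)) = HH x p \<longrightarrow> q' = q) \<and>
            (\<exists>Gp. ((\<lambda>p'. HH x p') has_derivative (\<lambda>h. Gp \<bullet> h)) (at p) \<and>
                  (\<forall>j. ((\<lambda>p'. H j x p') has_derivative (\<lambda>h. Gp \<bullet> h)) (at ((1 / d j) *\<^sub>R q j)))) \<and>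
            (\<exists>Gx. (\<forall>j. ((\<lambda>y. H j y ((1 / d j) *\<^sub>R q j)) has_derivative (\<lambda>h. Gx j \<bullet> h)) (at x)) \<and>
                  ((\<lambda>y. HH y p) has_derivative (\<lambda>h. (\<Sum>j\<in>UNIV. d j *\<^sub>R Gx j) \<bullet> h)) (at x)))"
    for x p
  proof -
    define vs where "vs = gl.V LL x p"
    have maxs: "\<forall>w. gl.F LL x p w \<le> gl.F LL x p vs" using gl.V_max[OF gM] vs_def by blast
    have ferm: "\<And>h. LL' (x, vs) (0, h) = p \<bullet> h" by (rule gl.fermat[OF gM maxs])
    define g where "g j = (\<Sum>b\<in>Basis. l' j (x, vs) (0, b) *\<^sub>R b)" for j
    have gh: "\<And>j h. g j \<bullet> h = l' j (x, vs) (0, h)" unfolding g_def by (rule grad_blinfun)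
    define q where "q j = d j *\<^sub>R g j" for j
    have qs: "(\<Sum>j\<in>UNIV. q j) = p"
    proof (rule inner_ext)
      fix h
      have "(\<Sum>j\<in>UNIV. q j) \<bullet> h = (\<Sum>j\<in>UNIV. d j * l' j (x, vs) (0, h))"
        by (simp add: q_def inner_sum_left gh)
      also have "\<dots> = LL' (x, vs) (0, h)" by (simp add: LL'_def blinfun.sum_left blinfun.scaleR_left)
      finally show "(\<Sum>j\<in>UNIV. q j) \<bullet> h = p \<bullet> h" using ferm by simp
    qed
    have qg: "(1 / d j) *\<^sub>R q j = g j" for j using dpos[of j] by (simp add: q_def)
    have Vj: "\<And>j. gl.V (L j) x (g j) = vs"
    proof -
      fix j
      have "\<forall>w. gl.F (L j) x (g j) w \<le> gl.F (L j) x (g j) vs"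
        using gl.fermat_conv[OF gj, of j x vs "g j"] gh by auto
      then show "gl.V (L j) x (g j) = vs" using gl.max_unique[OF gj] by metis
    qed
    have Hj: "\<And>j. H j x (g j) = g j \<bullet> vs - L j x vs"
      unfolding H_def using gl.ham[OF gj] Vj gl.F_def[OF gj] by metis
    have HHv: "HH x p = p \<bullet> vs - LL x vs"
      unfolding HHe using gl.ham[OF gM] vs_def gl.F_def[OF gM] by metis
    have val: "(\<Sum>j\<in>UNIV. d j * H j x ((1 / d j) *\<^sub>R q j)) = HH x p"
    proof -
      have "(\<Sum>j\<in>UNIV. d j * H j x ((1 / d j) *\<^sub>R q j)) = (\<Sum>j\<in>UNIV. q j \<bullet> vs - d j * L j x vs)"
        by (simp only: qg Hj) (simp add: q_def algebra_simps)
      also have "\<dots> = (\<Sum>j\<in>UNIV. q j) \<bullet> vs - LL x vs"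
        by (simp add: sum_subtractf inner_sum_left LL_def)
      finally show ?thesis using qs HHv by simp
    qed
    have lowterm: "d j * H j x ((1 / d j) *\<^sub>R r) \<ge> r \<bullet> vs - d j * L j x vs" for j r
    proof -
      have "H j x ((1 / d j) *\<^sub>R r) \<ge> ((1 / d j) *\<^sub>R r) \<bullet> vs - L j x vs"
        unfolding H_def by (rule gl.ham_ge[OF gj])
      then have "d j * H j x ((1 / d j) *\<^sub>R r) \<ge> d j * (((1 / d j) *\<^sub>R r) \<bullet> vs - L j x vs)"
        using dpos[of j] by (simp add: mult_left_mono)
      then show ?thesis using dpos[of j] by (simp add: algebra_simps)
    qed
    have lower: "HH x p \<le> (\<Sum>j\<in>UNIV. d j * H j x ((1 / d j) *\<^sub>R q' j))" if "(\<Sum>j\<in>UNIV. q' j) = p" for q'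
    proof -
      have "HH x p = (\<Sum>j\<in>UNIV. q' j \<bullet> vs - d j * L j x vs)"
        using HHv by (simp add: that[symmetric] sum_subtractf inner_sum_left LL_def)
      also have "\<dots> \<le> (\<Sum>j\<in>UNIV. d j * H j x ((1 / d j) *\<^sub>R q' j))"
        by (rule sum_mono) (rule lowterm)
      finally show ?thesis .
    qed
    have inf: "HH x p = Inf {(\<Sum>j\<in>UNIV. d j * H j x ((1 / d j) *\<^sub>R q j)) | q. (\<Sum>j\<in>UNIV. q j) = p}"
    proof (rule cInf_eq_minimum[symmetric])
      show "HH x p \<in> {(\<Sum>j\<in>UNIV. d j * H j x ((1 / d j) *\<^sub>R q j)) | q. (\<Sum>j\<in>UNIV. q j) = p}"
        using val qs by (metis (mono_tags, lifting) mem_Collect_eq)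
    next
      fix y assume "y \<in> {(\<Sum>j\<in>UNIV. d j * H j x ((1 / d j) *\<^sub>R q j)) | q. (\<Sum>j\<in>UNIV. q j) = p}"
      then show "HH x p \<le> y" using lower by blast
    qed
    have uniq: "q' = q" if q's: "(\<Sum>j\<in>UNIV. q' j) = p"
      and q'v: "(\<Sum>j\<in>UNIV. d j * H j x ((1 / d j) *\<^sub>R q' j)) = HH x p" for q'
    proof
      fix j
      define u where "u j = (1 / d j) *\<^sub>R q' j" for j
      have "(\<Sum>j\<in>UNIV. d j * H j x (u j) - (q' j \<bullet> vs - d j * L j x vs)) = 0"
        using q'v HHv unfolding u_def by (simp add: q's[symmetric] sum_subtractf inner_sum_left LL_def)
      moreover have "\<forall>j\<in>UNIV. d j * H j x (u j) - (q' j \<bullet> vs - d j * L j x vs) \<ge> 0"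
        using lowterm unfolding u_def by simp
      ultimately have "\<forall>j\<in>UNIV. d j * H j x (u j) - (q' j \<bullet> vs - d j * L j x vs) = 0"
        by (subst sum_nonneg_eq_0_iff[symmetric]) auto
      then have "d j * H j x (u j) = q' j \<bullet> vs - d j * L j x vs" by simp
      then have "d j * H j x (u j) = d j * (u j \<bullet> vs - L j x vs)"
        using dpos[of j] unfolding u_def by (simp add: algebra_simps)
      then have eqH: "H j x (u j) = u j \<bullet> vs - L j x vs" using dpos[of j] by simp
      have "\<forall>w. gl.F (L j) x (u j) w \<le> gl.F (L j) x (u j) vs"
        using gl.ham_ge[OF gj[of j], where y=x and u="u j"] eqH unfolding H_def gl.F_def[OF gj] by simp
      then have fu: "\<And>h. l' j (x, vs) (0, h) = u j \<bullet> h" by (rule gl.fermat[OF gj])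
      have "u j = g j"
      proof (rule inner_ext)
        fix h show "u j \<bullet> h = g j \<bullet> h" by (simp only: fu[symmetric] gh)
      qed
      moreover have "q' j = d j *\<^sub>R ((1 / d j) *\<^sub>R q' j)" using dpos[of j] by simp
      ultimately show "q' j = q j" unfolding u_def q_def by simp
    qed
    have Gp1: "((\<lambda>p'. HH x p') has_derivative (\<lambda>h. vs \<bullet> h)) (at p)"
      using gl.der_p[OF gM, of x p] unfolding HHe vs_def by simp
    have Gp2: "((\<lambda>p'. H j x p') has_derivative (\<lambda>h. vs \<bullet> h)) (at ((1 / d j) *\<^sub>R q j))" for j
      using gl.der_p[OF gj[of j], of x "g j"] unfolding H_def qg Vj by simp
    define Gx where "Gx j = - (\<Sum>b\<in>Basis. l' j (x, vs) (b, 0) *\<^sub>R b)" for j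
    have Gxh: "Gx j \<bullet> h = - l' j (x, vs) (h, 0)" for j h
      unfolding Gx_def inner_minus_left by (simp add: grad_blinfun)
    have Gx1: "((\<lambda>y. H j y ((1 / d j) *\<^sub>R q j)) has_derivative (\<lambda>h. Gx j \<bullet> h)) (at x)" for j
      using gl.der_x[OF gj[of j], of "g j" x] unfolding H_def qg Vj Gxh .
    have Gx2: "((\<lambda>y. HH y p) has_derivative (\<lambda>h. (\<Sum>j\<in>UNIV. d j *\<^sub>R Gx j) \<bullet> h)) (at x)"
    proof -
      have "(\<lambda>h. - LL' (x, vs) (h, 0)) = (\<lambda>h. (\<Sum>j\<in>UNIV. d j *\<^sub>R Gx j) \<bullet> h)"
        by (simp add: fun_eq_iff LL'_def blinfun.sum_left blinfun.scaleR_left inner_sum_left Gxh sum_negf)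
      then show ?thesis using gl.der_x[OF gM, of p x] unfolding HHe vs_def by simp
    qed
    show ?thesis using inf qs val uniq Gp1 Gp2 Gx1 Gx2 by blast
  qed
  show ?thesis using dpos main by blast
qed


end
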